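(* Let $n$ be a positive integer and let $R_3(n)$ denote the number of reduced $3\times n$ Latin rectangles. Define \[ g(t_{00},t_{10},t_{01},t_{11}) = (t_{00}+t_{10})(t_{00}+t_{01}) - t_{00}. \] Then \begin{eqnarray*} R_3(n)&=& \sum_{s_{00}+s_{10}+s_{01}+s_{11}=n} (-1)^{s_{10}+s_{01}+2s_{11}} \frac{n!}{s_{00}!\,s_{10}!\,s_{01}!\,s_{11}!} \\&&\cdot\; g(s_{00}-1,s_{10},s_{01},s_{11}+1)^{s_{00}}\, g(s_{00},s_{10}-1,s_{01},s_{11}+1)^{s_{10}} \\&&\cdot\; g(s_{00},s_{10},s_{01}-1,s_{11}+1)^{s_{01}}\, g(s_{00},s_{10},s_{01},s_{11})^{s_{11}}, \end{eqnarray*} where the sum runs over all quadruples of nonnegative integers $(s_{00},s_{10},s_{01},s_{11})$ with sum $n$.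
   Context: A $k\times n$ Latin rectangle is a $k\times n$ matrix with entries in $\{1,\dots,n\}$ such that no row and no column contains a repeated entry (so each row is a permutation of $\{1,\dots,n\}$). It is reduced if its first row is $1,2,\dots,n$ in order. The convention $x^0=1$ for every integer $x$ (including $0^0=1$) is used. *)

theory Defs
  imports Main
begin

text \<open>A k x n matrix is modelled as a function M :: nat => nat => nat, where M i j is the
entry in row i < k and column j < n (0-based indices). Entries outside the k x n range are
required to be 0, so that each matrix corresponds to exactly one function (this only serves
to make the set of Latin rectangles finite and in bijection with the actual matrices).\<close>

definition latin_rect :: "nat \<Rightarrow> nat \<Rightarrow> (nat \<Rightarrow> nat \<Rightarrow> nat) \<Rightarrow> bool" where
  "latin_rect k n M \<longleftrightarrow>
     (\<forall>i<k. \<forall>j<n. M i j \<in> {1..n}) \<and>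
     (\<forall>i<k. inj_on (\<lambda>j. M i j) {..<n}) \<and>
     (\<forall>j<n. inj_on (\<lambda>i. M i j) {..<k}) \<and>
     (\<forall>i j. \<not> (i < k \<and> j < n) \<longrightarrow> M i j = 0)"

definition reduced_latin_rect :: "nat \<Rightarrow> nat \<Rightarrow> (nat \<Rightarrow> nat \<Rightarrow> nat) \<Rightarrow> bool" where
  "reduced_latin_rect k n M \<longleftrightarrow> latin_rect k n M \<and> (\<forall>j<n. M 0 j = j + 1)"

definition R3 :: "nat \<Rightarrow> nat" where
  "R3 n = card {M. reduced_latin_rect 3 n M}"

definition g :: "int \<Rightarrow> int \<Rightarrow> int \<Rightarrow> int \<Rightarrow> int" where
  "g t00 t10 t01 t11 = (t00 + t10) * (t00 + t01) - t00"

end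

theory Submission
  imports Defs "HOL-Library.FuncSet"
begin


lemma alt:
  assumes "finite N" "B \<subseteq> N"
  shows "(\<Sum>S\<in>Pow N. (-1::int)^card S * (if B \<subseteq> S then 1 else 0)) = (if B = N then (-1)^card N else 0)"
proof -
  have "(\<Sum>S\<in>Pow N. (-1::int)^card S * (if B \<subseteq> S then 1 else 0)) = (\<Sum>S\<in>{T. T \<subseteq> N \<and> B \<subseteq> T}. (-1::int)^card S)"
    using assms by (auto intro!: sum.mono_neutral_cong_right split: if_splits)
  also have "\<dots> = (if B = N then (-1)^card N else 0)"
  proof (cases "B = N")
    case True
    then have "{T. T \<subseteq> N \<and> B \<subseteq> T} = {N}" by auto
    then show ?thesis using True by simp
  next
    case False
    then have "B \<subset> N" using assms by auto
    have "(\<Sum>S\<in>{T. T \<subseteq> N \<and> B \<subseteq> T}. (-1::int)^card S) = 0"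
      apply (rule sum_alternating_cancels)
      using card_subsupersets_even_odd[OF assms(1) \<open>B \<subset> N\<close>] assms(1) by (auto simp: conj_assoc)
    then show ?thesis using False by simp
  qed
  finally show ?thesis .
qed

lemma PiE_sub:
  assumes "S \<subseteq> N"
  shows "PiE N (\<lambda>_. S) = {f \<in> PiE N (\<lambda>_. N). f ` N \<subseteq> S}"
  using assms by (auto simp: PiE_def Pi_def)

lemma step1:
  fixes A :: "nat \<Rightarrow> nat \<Rightarrow> nat \<Rightarrow> int"
  assumes "finite N" "S \<subseteq> N" "T \<subseteq> N"
  shows "(\<Prod>i\<in>N. \<Sum>j\<in>S. \<Sum>k\<in>T. A i j k) =
    (\<Sum>f\<in>PiE N (\<lambda>_. N). \<Sum>h\<in>PiE N (\<lambda>_. N).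
       (if f ` N \<subseteq> S then 1 else 0) * (if h ` N \<subseteq> T then 1 else 0) * (\<Prod>i\<in>N. A i (f i) (h i)))"
proof -
  have fS: "finite S" "finite T" using assms finite_subset by auto
  have "(\<Prod>i\<in>N. \<Sum>j\<in>S. \<Sum>k\<in>T. A i j k) = (\<Sum>f\<in>PiE N (\<lambda>_. S). \<Prod>i\<in>N. \<Sum>k\<in>T. A i (f i) k)"
    by (rule prod_sum_PiE) (use assms fS in auto)
  also have "\<dots> = (\<Sum>f\<in>PiE N (\<lambda>_. S). \<Sum>h\<in>PiE N (\<lambda>_. T). \<Prod>i\<in>N. A i (f i) (h i))"
    by (rule sum.cong[OF refl], rule prod_sum_PiE) (use assms fS in auto)
  also have "\<dots> = (\<Sum>f\<in>PiE N (\<lambda>_. N). \<Sum>h\<in>PiE N (\<lambda>_. N).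
       (if f ` N \<subseteq> S then 1 else 0) * (if h ` N \<subseteq> T then 1 else 0) * (\<Prod>i\<in>N. A i (f i) (h i)))"
    unfolding PiE_sub[OF assms(2)] PiE_sub[OF assms(3)]
    using assms by (auto simp: sum.inter_filter finite_PiE intro!: sum.cong)
  finally show ?thesis .
qed

lemma swap4:
  fixes P :: "'f \<Rightarrow> 'h \<Rightarrow> int"
  shows "(\<Sum>S\<in>X. \<Sum>T\<in>Y. a S * b T * (\<Sum>f\<in>F. \<Sum>h\<in>H. c S f * d T h * P f h)) =
     (\<Sum>f\<in>F. \<Sum>h\<in>H. P f h * (\<Sum>S\<in>X. a S * c S f) * (\<Sum>T\<in>Y. b T * d T h))"
proof -
  have "(\<Sum>S\<in>X. \<Sum>T\<in>Y. a S * b T * (\<Sum>f\<in>F. \<Sum>h\<in>H. c S f * d T h * P f h)) =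
      (\<Sum>S\<in>X. \<Sum>T\<in>Y. \<Sum>f\<in>F. \<Sum>h\<in>H. a S * b T * c S f * d T h * P f h)"
    by (simp add: sum_distrib_left mult_ac)
  also have "\<dots> = (\<Sum>S\<in>X. \<Sum>f\<in>F. \<Sum>T\<in>Y. \<Sum>h\<in>H. a S * b T * c S f * d T h * P f h)"
    by (rule sum.cong[OF refl], rule sum.swap)
  also have "\<dots> = (\<Sum>f\<in>F. \<Sum>S\<in>X. \<Sum>T\<in>Y. \<Sum>h\<in>H. a S * b T * c S f * d T h * P f h)"
    by (rule sum.swap)
  also have "\<dots> = (\<Sum>f\<in>F. \<Sum>S\<in>X. \<Sum>h\<in>H. \<Sum>T\<in>Y. a S * b T * c S f * d T h * P f h)"
    by (rule sum.cong[OF refl], rule sum.cong[OF refl], rule sum.swap)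
  also have "\<dots> = (\<Sum>f\<in>F. \<Sum>h\<in>H. \<Sum>S\<in>X. \<Sum>T\<in>Y. a S * b T * c S f * d T h * P f h)"
    by (rule sum.cong[OF refl], rule sum.swap)
  also have "\<dots> = (\<Sum>f\<in>F. \<Sum>h\<in>H. P f h * (\<Sum>S\<in>X. a S * c S f) * (\<Sum>T\<in>Y. b T * d T h))"
    by (simp add: sum_distrib_left sum_distrib_right mult_ac)
  finally show ?thesis .
qed

lemma ryser:
  fixes A :: "nat \<Rightarrow> nat \<Rightarrow> nat \<Rightarrow> int"
  assumes "finite N"
  shows "(\<Sum>S\<in>Pow N. \<Sum>T\<in>Pow N. (-1)^card S * (-1)^card T * (\<Prod>i\<in>N. \<Sum>j\<in>S. \<Sum>k\<in>T. A i j k)) =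
    (\<Sum>f\<in>PiE N (\<lambda>_. N). \<Sum>h\<in>PiE N (\<lambda>_. N).
       (if f ` N = N \<and> h ` N = N then (\<Prod>i\<in>N. A i (f i) (h i)) else 0))"
proof -
  have "(\<Sum>S\<in>Pow N. \<Sum>T\<in>Pow N. (-1)^card S * (-1)^card T * (\<Prod>i\<in>N. \<Sum>j\<in>S. \<Sum>k\<in>T. A i j k)) =
    (\<Sum>S\<in>Pow N. \<Sum>T\<in>Pow N. (-1)^card S * (-1)^card T * (\<Sum>f\<in>PiE N (\<lambda>_. N). \<Sum>h\<in>PiE N (\<lambda>_. N).
       (if f ` N \<subseteq> S then 1 else 0) * (if h ` N \<subseteq> T then 1 else 0) * (\<Prod>i\<in>N. A i (f i) (h i))))"
    by (intro sum.cong refl arg_cong2[where f="(*)"] step1) (use assms in auto)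
  also have "\<dots> = (\<Sum>f\<in>PiE N (\<lambda>_. N). \<Sum>h\<in>PiE N (\<lambda>_. N). (\<Prod>i\<in>N. A i (f i) (h i)) *
      (\<Sum>S\<in>Pow N. (-1)^card S * (if f ` N \<subseteq> S then 1 else 0)) *
      (\<Sum>T\<in>Pow N. (-1)^card T * (if h ` N \<subseteq> T then 1 else 0)))"
    by (rule swap4)
  also have "\<dots> = (\<Sum>f\<in>PiE N (\<lambda>_. N). \<Sum>h\<in>PiE N (\<lambda>_. N). (\<Prod>i\<in>N. A i (f i) (h i)) *
      (if f ` N = N then (-1)^card N else 0) * (if h ` N = N then (-1)^card N else 0))"
    by (intro sum.cong refl arg_cong2[where f="(*)"] alt assms) (auto simp: PiE_def Pi_def)
  also have "\<dots> = (\<Sum>f\<in>PiE N (\<lambda>_. N). \<Sum>h\<in>PiE N (\<lambda>_. N).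
       (if f ` N = N \<and> h ` N = N then (\<Prod>i\<in>N. A i (f i) (h i)) else 0))"
    by (intro sum.cong refl) (auto simp flip: power_add)
  finally show ?thesis .
qed

definition A0 :: "nat \<Rightarrow> nat \<Rightarrow> nat \<Rightarrow> int" where
  "A0 i j k = (if j \<noteq> i \<and> k \<noteq> i \<and> j \<noteq> k then 1 else 0)"

definition PP :: "nat \<Rightarrow> ((nat \<Rightarrow> nat) \<times> (nat \<Rightarrow> nat)) set" where
  "PP n = {(f, h). f \<in> PiE {..<n} (\<lambda>_. {..<n}) \<and> h \<in> PiE {..<n} (\<lambda>_. {..<n}) \<and>
     f ` {..<n} = {..<n} \<and> h ` {..<n} = {..<n} \<and> (\<forall>i<n. f i \<noteq> i \<and> h i \<noteq> i \<and> f i \<noteq> h i)}"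

lemma sum_to_card:
  "(\<Sum>f\<in>PiE {..<n} (\<lambda>_. {..<n}). \<Sum>h\<in>PiE {..<n} (\<lambda>_. {..<n}).
       (if f ` {..<n} = {..<n} \<and> h ` {..<n} = {..<n} then (\<Prod>i\<in>{..<n}. A0 i (f i) (h i)) else 0)) = int (card (PP n))"
proof -
  let ?N = "{..<n}"
  have "(\<Sum>f\<in>PiE ?N (\<lambda>_. ?N). \<Sum>h\<in>PiE ?N (\<lambda>_. ?N).
       (if f ` ?N = ?N \<and> h ` ?N = ?N then (\<Prod>i\<in>?N. A0 i (f i) (h i)) else 0)) =
     (\<Sum>f\<in>PiE ?N (\<lambda>_. ?N). \<Sum>h\<in>PiE ?N (\<lambda>_. ?N).
       of_bool (f ` ?N = ?N \<and> h ` ?N = ?N \<and> (\<forall>i<n. f i \<noteq> i \<and> h i \<noteq> i \<and> f i \<noteq> h i)))"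
  proof (intro sum.cong refl)
    fix f h
    have "(\<Prod>i\<in>?N. A0 i (f i) (h i)) = of_bool (\<forall>i<n. f i \<noteq> i \<and> h i \<noteq> i \<and> f i \<noteq> h i)"
    proof (cases "\<forall>i<n. f i \<noteq> i \<and> h i \<noteq> i \<and> f i \<noteq> h i")
      case True
      then show ?thesis by (simp add: A0_def)
    next
      case False
      then obtain i where "i < n" "\<not> (f i \<noteq> i \<and> h i \<noteq> i \<and> f i \<noteq> h i)" by auto
      then have "A0 i (f i) (h i) = 0" by (auto simp: A0_def)
      then have P0: "(\<Prod>i\<in>?N. A0 i (f i) (h i)) = 0"
        using \<open>i < n\<close> by (intro prod_zero) auto
      show ?thesis unfolding P0 using False by auto
    qed
    then show "(if f ` ?N = ?N \<and> h ` ?N = ?N then (\<Prod>i\<in>?N. A0 i (f i) (h i)) else 0) =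
       of_bool (f ` ?N = ?N \<and> h ` ?N = ?N \<and> (\<forall>i<n. f i \<noteq> i \<and> h i \<noteq> i \<and> f i \<noteq> h i))"
      by (cases "f ` ?N = ?N \<and> h ` ?N = ?N") auto
  qed
  also have "\<dots> = (\<Sum>p\<in>PiE ?N (\<lambda>_. ?N) \<times> PiE ?N (\<lambda>_. ?N).
       of_bool (fst p ` ?N = ?N \<and> snd p ` ?N = ?N \<and> (\<forall>i<n. fst p i \<noteq> i \<and> snd p i \<noteq> i \<and> fst p i \<noteq> snd p i)))"
    by (simp add: sum.cartesian_product case_prod_beta)
  also have "\<dots> = int (card (PP n))"
    by (subst sum_of_bool_eq) (auto simp: finite_PiE PP_def intro!: arg_cong[where f=card])
  finally show ?thesis .
qed

definition Phi :: "nat \<Rightarrow> (nat \<Rightarrow> nat) \<times> (nat \<Rightarrow> nat) \<Rightarrow> nat \<Rightarrow> nat \<Rightarrow> nat" where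
  "Phi n p = (\<lambda>i j. if j < n then (if i = 0 then j + 1 else if i = 1 then fst p j + 1
      else if i = 2 then snd p j + 1 else 0) else 0)"

definition Psi :: "nat \<Rightarrow> (nat \<Rightarrow> nat \<Rightarrow> nat) \<Rightarrow> (nat \<Rightarrow> nat) \<times> (nat \<Rightarrow> nat)" where
  "Psi n M = (restrict (\<lambda>j. M 1 j - 1) {..<n}, restrict (\<lambda>j. M 2 j - 1) {..<n})"

lemma lt3: "(i::nat) < 3 \<longleftrightarrow> i = 0 \<or> i = 1 \<or> i = 2" by auto

lemma R3_card: "R3 n = card (PP n)"
proof -
  let ?N = "{..<n}"
  let ?L = "{M. reduced_latin_rect 3 n M}"
  have "bij_betw (Phi n) (PP n) ?L"
  proof (rule bij_betw_byWitness[where f'="Psi n"])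
    show "\<forall>a\<in>PP n. Psi n (Phi n a) = a"
    proof
      fix a assume a: "a \<in> PP n"
      obtain f h where [simp]: "a = (f, h)" by fastforce
      have f: "f \<in> PiE ?N (\<lambda>_. ?N)" and h: "h \<in> PiE ?N (\<lambda>_. ?N)" using a by (auto simp: PP_def)
      show "Psi n (Phi n a) = a"
        using f h by (auto simp: Psi_def Phi_def restrict_def PiE_def extensional_def fun_eq_iff)
    qed
    show "\<forall>M\<in>?L. Phi n (Psi n M) = M"
    proof
      fix M assume "M \<in> ?L"
      then have L: "latin_rect 3 n M" and r: "\<forall>j<n. M 0 j = j + 1" by (auto simp: reduced_latin_rect_def)
      have rng: "\<And>i j. i < 3 \<Longrightarrow> j < n \<Longrightarrow> M i j \<in> {1..n}" and z: "\<And>i j. \<not> (i < 3 \<and> j < n) \<Longrightarrow> M i j = 0"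
        using L unfolding latin_rect_def by blast+
      show "Phi n (Psi n M) = M"
      proof (intro ext)
        fix i j
        show "Phi n (Psi n M) i j = M i j"
        proof (cases "i < 3 \<and> j < n")
          case True
          then have "M i j \<ge> 1" using rng by fastforce
          then show ?thesis using True r by (auto simp: Phi_def Psi_def lt3)
        next
          case False
          then show ?thesis using z[OF False] by (auto simp: Phi_def Psi_def)
        qed
      qed
    qed
    show "Phi n ` PP n \<subseteq> ?L"
    proof
      fix M assume "M \<in> Phi n ` PP n"
      then obtain f h where fh: "(f, h) \<in> PP n" and M: "M = Phi n (f, h)" by auto
      have f: "f \<in> PiE ?N (\<lambda>_. ?N)" and h: "h \<in> PiE ?N (\<lambda>_. ?N)" and fs: "f ` ?N = ?N" and hs: "h ` ?N = ?N"
        and c: "\<forall>i<n. f i \<noteq> i \<and> h i \<noteq> i \<and> f i \<noteq> h i" using fh by (auto simp: PP_def)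
      have fi: "inj_on f ?N" by (rule eq_card_imp_inj_on) (auto simp: fs)
      have hi: "inj_on h ?N" by (rule eq_card_imp_inj_on) (auto simp: hs)
      have "latin_rect 3 n M"
        unfolding latin_rect_def
      proof (intro conjI allI impI)
        fix i j :: nat assume "i < 3" "j < n"
        then show "M i j \<in> {1..n}" using f h by (auto simp: M Phi_def lt3 PiE_def Pi_def)
      next
        fix i :: nat assume "i < 3"
        then show "inj_on (\<lambda>j. M i j) ?N" using fi hi by (auto simp: M Phi_def lt3 inj_on_def)
      next
        fix j :: nat assume "j < n"
        then show "inj_on (\<lambda>i. M i j) {..<3}" using c by (auto simp: M Phi_def lt3 inj_on_def)
      next
        fix i j :: nat assume "\<not> (i < 3 \<and> j < n)"
        then show "M i j = 0" by (auto simp: M Phi_def lt3)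
      qed
      then show "M \<in> ?L" by (auto simp: reduced_latin_rect_def M Phi_def)
    qed
    show "Psi n ` ?L \<subseteq> PP n"
    proof
      fix p assume "p \<in> Psi n ` ?L"
      then obtain M where "M \<in> ?L" and p: "p = Psi n M" by auto
      then have L: "latin_rect 3 n M" and r: "\<forall>j<n. M 0 j = j + 1" by (auto simp: reduced_latin_rect_def)
      have rng: "\<And>i j. i < 3 \<Longrightarrow> j < n \<Longrightarrow> M i j \<in> {1..n}" 
        and ri: "\<And>i. i < 3 \<Longrightarrow> inj_on (\<lambda>j. M i j) ?N"
        and ci: "\<And>j. j < n \<Longrightarrow> inj_on (\<lambda>i. M i j) {..<3}"
        using L unfolding latin_rect_def by blast+
      define f where "f = restrict (\<lambda>j. M 1 j - 1) ?N"
      define h where "h = restrict (\<lambda>j. M 2 j - 1) ?N"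
      have p': "p = (f, h)" by (simp add: p Psi_def f_def h_def)
      have r1: "\<And>j. j < n \<Longrightarrow> M 1 j \<in> {1..n}" and r2: "\<And>j. j < n \<Longrightarrow> M 2 j \<in> {1..n}" using rng by auto
      have fP: "f \<in> PiE ?N (\<lambda>_. ?N)" using r1 by (force simp: f_def)
      have hP: "h \<in> PiE ?N (\<lambda>_. ?N)" using r2 by (force simp: h_def)
      have fsub: "f ` ?N \<subseteq> ?N" using fP by (auto simp: PiE_def)
      have hsub: "h ` ?N \<subseteq> ?N" using hP by (auto simp: PiE_def)
      have fi: "inj_on f ?N"
      proof (rule inj_onI)
        fix x y assume "x \<in> ?N" "y \<in> ?N" "f x = f y"
        then have "M 1 x - 1 = M 1 y - 1" by (simp add: f_def)
        moreover have "M 1 x \<ge> 1" "M 1 y \<ge> 1" using r1[of x] r1[of y] \<open>x \<in> ?N\<close> \<open>y \<in> ?N\<close> by auto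
        ultimately have "M 1 x = M 1 y" by linarith
        then show "x = y" using ri[of 1] \<open>x \<in> ?N\<close> \<open>y \<in> ?N\<close> by (auto dest: inj_onD)
      qed
      have hi: "inj_on h ?N"
      proof (rule inj_onI)
        fix x y assume "x \<in> ?N" "y \<in> ?N" "h x = h y"
        then have "M 2 x - 1 = M 2 y - 1" by (simp add: h_def)
        moreover have "M 2 x \<ge> 1" "M 2 y \<ge> 1" using r2[of x] r2[of y] \<open>x \<in> ?N\<close> \<open>y \<in> ?N\<close> by auto
        ultimately have "M 2 x = M 2 y" by linarith
        then show "x = y" using ri[of 2] \<open>x \<in> ?N\<close> \<open>y \<in> ?N\<close> by (auto dest: inj_onD)
      qed
      have c: "\<forall>i<n. f i \<noteq> i \<and> h i \<noteq> i \<and> f i \<noteq> h i"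
      proof (intro allI impI)
        fix i assume i: "i < n"
        have d01: "M 0 i \<noteq> M 1 i" and d02: "M 0 i \<noteq> M 2 i" and d12: "M 1 i \<noteq> M 2 i"
          using inj_onD[OF ci[OF i], of 0 1] inj_onD[OF ci[OF i], of 0 2] inj_onD[OF ci[OF i], of 1 2] by auto
        then show "f i \<noteq> i \<and> h i \<noteq> i \<and> f i \<noteq> h i"
          using r1[OF i] r2[OF i] r i by (auto simp: f_def h_def)
      qed
      show "p \<in> PP n"
        unfolding p' PP_def using fP hP c endo_inj_surj[OF _ fsub fi] endo_inj_surj[OF _ hsub hi] by auto
    qed
  qed
  then show ?thesis unfolding R3_def by (simp add: bij_betw_same_card)
qed



lemma pow_card_sum:
  fixes f :: "nat \<Rightarrow> int"
  assumes "finite W"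
  shows "(\<Sum>U\<in>Pow W. f (card U)) = (\<Sum>k\<le>card W. int (card W choose k) * f k)"
proof -
  have "(\<Sum>U\<in>Pow W. f (card U)) = (\<Sum>k\<le>card W. \<Sum>U\<in>{U. U \<in> Pow W \<and> card U = k}. f (card U))"
    by (rule sum.group[symmetric]) (use assms in \<open>auto intro: card_mono\<close>)
  also have "\<dots> = (\<Sum>k\<le>card W. \<Sum>U\<in>{U. U \<subseteq> W \<and> card U = k}. f k)"
    by (intro sum.cong refl) auto
  also have "\<dots> = (\<Sum>k\<le>card W. int (card W choose k) * f k)"
    using n_subsets[OF assms] by simp
  finally show ?thesis .
qed

lemma pow_split:
  fixes G :: "'a set \<Rightarrow> int"
  assumes "finite N" "S \<subseteq> N"
  shows "(\<Sum>T\<in>Pow N. G T) = (\<Sum>X\<in>Pow S. \<Sum>Z\<in>Pow (N - S). G (X \<union> Z))"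
proof -
  have inj: "inj_on (\<lambda>(X, Z). X \<union> Z) (Pow S \<times> Pow (N - S))"
    by (rule inj_onI) (auto simp: set_eq_iff)
  have im: "(\<lambda>(X, Z). X \<union> Z) ` (Pow S \<times> Pow (N - S)) = Pow N"
  proof
    show "(\<lambda>(X, Z). X \<union> Z) ` (Pow S \<times> Pow (N - S)) \<subseteq> Pow N" using assms by auto
    show "Pow N \<subseteq> (\<lambda>(X, Z). X \<union> Z) ` (Pow S \<times> Pow (N - S))"
    proof
      fix T assume "T \<in> Pow N"
      then have "T = (\<lambda>(X, Z). X \<union> Z) (T \<inter> S, T - S)" "(T \<inter> S, T - S) \<in> Pow S \<times> Pow (N - S)" by auto
      then show "T \<in> (\<lambda>(X, Z). X \<union> Z) ` (Pow S \<times> Pow (N - S))" by blast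
    qed
  qed
  have "(\<Sum>T\<in>Pow N. G T) = (\<Sum>p\<in>Pow S \<times> Pow (N - S). G ((\<lambda>(X, Z). X \<union> Z) p))"
    using sum.reindex[OF inj, of G] im by simp
  also have "\<dots> = (\<Sum>X\<in>Pow S. \<Sum>Z\<in>Pow (N - S). G (X \<union> Z))"
    by (simp add: sum.cartesian_product case_prod_beta)
  finally show ?thesis .
qed

lemma group_ST:
  fixes V :: "nat \<Rightarrow> nat \<Rightarrow> nat \<Rightarrow> nat \<Rightarrow> int"
  assumes fN: "finite N"
  shows "(\<Sum>S\<in>Pow N. \<Sum>T\<in>Pow N. V (card (S \<inter> T)) (card (S - T)) (card (T - S)) (card (N - (S \<union> T))))
    = (\<Sum>s\<le>card N. int (card N choose s) * (\<Sum>a\<le>s. int (s choose a) *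
         (\<Sum>c\<le>card N - s. int ((card N - s) choose c) * V a (s - a) c (card N - s - c))))"
proof -
  let ?n = "card N"
  define K where "K s = (\<Sum>a\<le>s. int (s choose a) *
         (\<Sum>c\<le>?n - s. int ((?n - s) choose c) * V a (s - a) c (?n - s - c)))" for s
  have inner: "(\<Sum>T\<in>Pow N. V (card (S \<inter> T)) (card (S - T)) (card (T - S)) (card (N - (S \<union> T)))) = K (card S)"
    if S: "S \<in> Pow N" for S
  proof -
    have SN: "S \<subseteq> N" using S by auto
    have fS: "finite S" using SN fN finite_subset by auto
    have cNS: "card (N - S) = ?n - card S" using SN fS by (simp add: card_Diff_subset)
    have "(\<Sum>T\<in>Pow N. V (card (S \<inter> T)) (card (S - T)) (card (T - S)) (card (N - (S \<union> T))))
      = (\<Sum>X\<in>Pow S. \<Sum>Z\<in>Pow (N - S). V (card (S \<inter> (X \<union> Z))) (card (S - (X \<union> Z))) (card ((X \<union> Z) - S)) (card (N - (S \<union> (X \<union> Z)))))"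
      by (rule pow_split[OF fN SN])
    also have "\<dots> = (\<Sum>X\<in>Pow S. \<Sum>Z\<in>Pow (N - S). V (card X) (card S - card X) (card Z) (?n - card S - card Z))"
    proof (intro sum.cong refl)
      fix X Z assume X: "X \<in> Pow S" and Z: "Z \<in> Pow (N - S)"
      have fX: "finite X" using X fS finite_subset by auto
      have fZ: "finite Z" using Z fN finite_subset by auto
      have e1: "S \<inter> (X \<union> Z) = X" using X Z by auto
      have e2: "S - (X \<union> Z) = S - X" using X Z by auto
      have e3: "(X \<union> Z) - S = Z" using X Z by auto
      have e4: "N - (S \<union> (X \<union> Z)) = (N - S) - Z" using X Z by auto
      show "V (card (S \<inter> (X \<union> Z))) (card (S - (X \<union> Z))) (card ((X \<union> Z) - S)) (card (N - (S \<union> (X \<union> Z)))) =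
         V (card X) (card S - card X) (card Z) (?n - card S - card Z)"
        unfolding e1 e2 e3 e4 using X Z fX fZ cNS by (simp add: card_Diff_subset)
    qed
    also have "\<dots> = (\<Sum>X\<in>Pow S. \<Sum>c\<le>?n - card S. int ((?n - card S) choose c) * V (card X) (card S - card X) c (?n - card S - c))"
      by (intro sum.cong refl) (use pow_card_sum[of "N - S"] fN cNS in simp)
    also have "\<dots> = K (card S)"
      unfolding K_def by (rule pow_card_sum[OF fS, where f = "\<lambda>a. (\<Sum>c\<le>?n - card S. int ((?n - card S) choose c) * V a (card S - a) c (?n - card S - c))"])
    finally show ?thesis .
  qed
  have "(\<Sum>S\<in>Pow N. \<Sum>T\<in>Pow N. V (card (S \<inter> T)) (card (S - T)) (card (T - S)) (card (N - (S \<union> T))))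
     = (\<Sum>S\<in>Pow N. K (card S))" using inner by simp
  also have "\<dots> = (\<Sum>s\<le>?n. int (?n choose s) * K s)" by (rule pow_card_sum[OF fN])
  finally show ?thesis unfolding K_def .
qed

lemma multinom:
  assumes "a + b + c + d = (n::nat)"
  shows "fact n div (fact a * fact b * fact c * fact d) = (n choose (a + b)) * ((a + b) choose a) * ((n - (a + b)) choose c)"
proof -
  have 1: "fact (a + b) * fact (n - (a + b)) * (n choose (a + b)) = (fact n :: nat)"
    by (rule binomial_fact_lemma) (use assms in auto)
  have 2: "fact a * fact b * ((a + b) choose a) = (fact (a + b) :: nat)"
    using binomial_fact_lemma[of a "a + b"] by simp
  have 3: "fact c * fact d * ((n - (a + b)) choose c) = (fact (n - (a + b)) :: nat)"
  proof -
    have e: "n - (a + b) = c + d" using assms by simp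
    show ?thesis using binomial_fact_lemma[of c "c + d"] unfolding e by simp
  qed
  have "fact n = (fact a * fact b * fact c * fact d) * ((n choose (a + b)) * ((a + b) choose a) * ((n - (a + b)) choose c))"
    unfolding 1[symmetric] 2[symmetric] 3[symmetric] by (simp add: mult_ac)
  moreover have "(fact a * fact b * fact c * fact d :: nat) > 0" by simp
  ultimately show ?thesis by simp
qed

lemma quad:
  fixes V :: "nat \<Rightarrow> nat \<Rightarrow> nat \<Rightarrow> nat \<Rightarrow> int"
  shows "(\<Sum>s\<le>n. int (n choose s) * (\<Sum>a\<le>s. int (s choose a) *
         (\<Sum>c\<le>n - s. int ((n - s) choose c) * V a (s - a) c (n - s - c))))
    = (\<Sum>(a, b, c, d)\<in>{(a, b, c, d). a + b + c + d = n}. int (fact n div (fact a * fact b * fact c * fact d)) * V a b c d)"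
proof -
  define D where "D = (SIGMA s:{..n}. SIGMA a:{..s}. {..n - s})"
  define m where "m = (\<lambda>(s::nat, a::nat, c::nat). (a, s - a, c, n - s - c))"
  define H where "H = (\<lambda>(a, b, c, d). int (fact n div (fact a * fact b * fact c * fact d)) * V a b c d)"
  have inj: "inj_on m D" by (rule inj_onI) (auto simp: m_def D_def)
  have im: "m ` D = {(a, b, c, d). a + b + c + d = n}"
  proof
    show "m ` D \<subseteq> {(a, b, c, d). a + b + c + d = n}" by (auto simp: m_def D_def)
    show "{(a, b, c, d). a + b + c + d = n} \<subseteq> m ` D"
    proof
      fix q assume "q \<in> {(a, b, c, d). a + b + c + d = (n::nat)}"
      then obtain a b c d where q: "q = (a, b, c, d)" "a + b + c + d = n" by auto
      then have "q = m (a + b, a, c)" "(a + b, a, c) \<in> D" by (auto simp: m_def D_def)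
      then show "q \<in> m ` D" by blast
    qed
  qed
  have "(\<Sum>(a, b, c, d)\<in>{(a, b, c, d). a + b + c + d = n}. int (fact n div (fact a * fact b * fact c * fact d)) * V a b c d)
     = sum H (m ` D)" unfolding im H_def ..
  also have "\<dots> = (\<Sum>p\<in>D. H (m p))" by (rule sum.reindex[OF inj, unfolded comp_def])
  also have "\<dots> = (\<Sum>s\<le>n. \<Sum>a\<le>s. \<Sum>c\<le>n - s. H (m (s, a, c)))"
  proof -
    have "(\<Sum>p\<in>D. H (m p)) = (\<Sum>s\<le>n. \<Sum>q\<in>{..s} \<times> {..n - s}. H (m (s, q)))"
      unfolding D_def by (subst sum.Sigma) auto
    also have "\<dots> = (\<Sum>s\<le>n. \<Sum>a\<le>s. \<Sum>c\<le>n - s. H (m (s, a, c)))"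
      by (simp add: sum.cartesian_product')
    finally show ?thesis .
  qed
  also have "\<dots> = (\<Sum>s\<le>n. \<Sum>a\<le>s. \<Sum>c\<le>n - s. int (n choose s) * (int (s choose a) * (int ((n - s) choose c) * V a (s - a) c (n - s - c))))"
  proof (intro sum.cong refl)
    fix s a c assume "s \<in> {..n}" "a \<in> {..s}" "c \<in> {..n - s}"
    then have "a + (s - a) + c + (n - s - c) = n" by auto
    from multinom[OF this] \<open>a \<in> {..s}\<close>
    show "H (m (s, a, c)) = int (n choose s) * (int (s choose a) * (int ((n - s) choose c) * V a (s - a) c (n - s - c)))"
      by (simp add: H_def m_def)
  qed
  also have "\<dots> = (\<Sum>s\<le>n. int (n choose s) * (\<Sum>a\<le>s. int (s choose a) *
         (\<Sum>c\<le>n - s. int ((n - s) choose c) * V a (s - a) c (n - s - c))))"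
    by (simp add: sum_distrib_left)
  finally show ?thesis by simp
qed



lemma aux_ne:
  assumes "finite U"
  shows "(\<Sum>k\<in>U. of_bool (j \<noteq> k) :: int) = int (card U) - of_bool (j \<in> U)"
proof -
  have e: "U \<inter> {k. j \<noteq> k} = U - {j}" by auto
  show ?thesis
  proof (cases "j \<in> U")
    case True
    then have "card U > 0" using assms card_gt_0_iff by blast
    then show ?thesis using True assms by (simp add: e of_nat_diff)
  next
    case False
    then show ?thesis using assms by (simp add: e)
  qed
qed

lemma pairs:
  assumes "finite S" "finite T"
  shows "(\<Sum>j\<in>S. \<Sum>k\<in>T. A0 i j k) = int (card (S - {i})) * int (card (T - {i})) - int (card ((S \<inter> T) - {i}))"
proof -
  let ?S = "S - {i}" and ?T = "T - {i}"
  have fin: "finite ?S" "finite ?T" using assms by auto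
  have "(\<Sum>j\<in>S. \<Sum>k\<in>T. A0 i j k) = (\<Sum>j\<in>S. \<Sum>k\<in>T. of_bool (j \<in> ?S) * (of_bool (k \<in> ?T) * of_bool (j \<noteq> k)))"
    by (intro sum.cong refl) (auto simp: A0_def)
  also have "\<dots> = (\<Sum>j\<in>?S. \<Sum>k\<in>?T. of_bool (j \<noteq> k))"
    by (simp add: sum_distrib_left[symmetric] assms Int_def conj_commute) (intro sum.cong; auto)
  also have "\<dots> = (\<Sum>j\<in>?S. int (card ?T) - of_bool (j \<in> ?T))"
    by (intro sum.cong refl aux_ne fin)
  also have "\<dots> = int (card ?S) * int (card ?T) - int (card (?S \<inter> ?T))"
    using fin by (simp add: sum_subtractf Int_def) (intro arg_cong[where f=card]; auto)
  also have "?S \<inter> ?T = (S \<inter> T) - {i}" by auto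
  finally show ?thesis .
qed

definition VV :: "nat \<Rightarrow> nat \<Rightarrow> nat \<Rightarrow> nat \<Rightarrow> int" where
  "VV a b c d = (-1) ^ (b + c + 2 * d)
       * g (int a - 1) (int b) (int c) (int d + 1) ^ a
       * g (int a) (int b - 1) (int c) (int d + 1) ^ b
       * g (int a) (int b) (int c - 1) (int d + 1) ^ c
       * g (int a) (int b) (int c) (int d) ^ d"

lemma card_rm:
  assumes "finite U"
  shows "int (card (U - {i})) = int (card U) - of_bool (i \<in> U)"
proof (cases "i \<in> U")
  case True
  then have "card U > 0" using assms card_gt_0_iff by blast
  then show ?thesis using True assms by (simp add: of_nat_diff)
qed simp

lemma value_ST:
  assumes fN: "finite N" and SN: "S \<subseteq> N" and TN: "T \<subseteq> N"
  shows "(-1)^card S * (-1)^card T * (\<Prod>i\<in>N. \<Sum>j\<in>S. \<Sum>k\<in>T. A0 i j k)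
       = VV (card (S \<inter> T)) (card (S - T)) (card (T - S)) (card (N - (S \<union> T)))"
proof -
  define X where "X = S \<inter> T"
  define Y where "Y = S - T"
  define Z where "Z = T - S"
  define W where "W = N - (S \<union> T)"
  define a where "a = card X"
  define b where "b = card Y"
  define c where "c = card Z"
  define d where "d = card W"
  have fS: "finite S" and fT: "finite T" using SN TN fN finite_subset by auto
  have fX: "finite X" "finite Y" "finite Z" "finite W" using fS fT fN by (auto simp: X_def Y_def Z_def W_def)
  have cS: "card S = a + b"
  proof -
    have "S = X \<union> Y" "X \<inter> Y = {}" by (auto simp: X_def Y_def)
    then show ?thesis using fX by (simp add: card_Un_disjoint a_def b_def)
  qed
  have cT: "card T = a + c"
  proof -
    have "T = X \<union> Z" "X \<inter> Z = {}" by (auto simp: X_def Z_def)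
    then show ?thesis using fX by (simp add: card_Un_disjoint a_def c_def)
  qed
  define F where "F i = (\<Sum>j\<in>S. \<Sum>k\<in>T. A0 i j k)" for i
  have F: "F i = (int a + int b - of_bool (i \<in> S)) * (int a + int c - of_bool (i \<in> T)) - (int a - of_bool (i \<in> X))" for i
    unfolding F_def pairs[OF fS fT] card_rm[OF fS] card_rm[OF fT] card_rm[OF fX(1)[unfolded X_def]]
    by (simp add: cS cT a_def X_def)
  have N: "N = ((X \<union> Y) \<union> Z) \<union> W" using SN TN by (auto simp: X_def Y_def Z_def W_def)
  have "(\<Prod>i\<in>N. F i) = (\<Prod>i\<in>X. F i) * (\<Prod>i\<in>Y. F i) * (\<Prod>i\<in>Z. F i) * (\<Prod>i\<in>W. F i)"
    unfolding N using fX
    by (subst prod.union_disjoint; (simp add: X_def Y_def Z_def W_def)?; blast?)+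
  also have "(\<Prod>i\<in>X. F i) = (\<Prod>i\<in>X. g (int a - 1) (int b) (int c) (int d + 1))"
    by (rule prod.cong) (auto simp: F X_def g_def algebra_simps)
  also have "\<dots> = g (int a - 1) (int b) (int c) (int d + 1) ^ a" by (simp add: a_def)
  also have "(\<Prod>i\<in>Y. F i) = (\<Prod>i\<in>Y. g (int a) (int b - 1) (int c) (int d + 1))"
    by (rule prod.cong) (auto simp: F X_def Y_def g_def algebra_simps)
  also have "\<dots> = g (int a) (int b - 1) (int c) (int d + 1) ^ b" by (simp add: b_def)
  also have "(\<Prod>i\<in>Z. F i) = (\<Prod>i\<in>Z. g (int a) (int b) (int c - 1) (int d + 1))"
    by (rule prod.cong) (auto simp: F X_def Z_def g_def algebra_simps)
  also have "\<dots> = g (int a) (int b) (int c - 1) (int d + 1) ^ c" by (simp add: c_def)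
  also have "(\<Prod>i\<in>W. F i) = (\<Prod>i\<in>W. g (int a) (int b) (int c) (int d))"
    by (rule prod.cong) (auto simp: F X_def W_def g_def algebra_simps)
  also have "\<dots> = g (int a) (int b) (int c) (int d) ^ d" by (simp add: d_def)
  finally have P: "(\<Prod>i\<in>N. F i) = g (int a - 1) (int b) (int c) (int d + 1) ^ a * g (int a) (int b - 1) (int c) (int d + 1) ^ b
     * g (int a) (int b) (int c - 1) (int d + 1) ^ c * g (int a) (int b) (int c) (int d) ^ d" .
  have sgn: "(-1::int)^card S * (-1)^card T = (-1) ^ (b + c + 2 * d)"
  proof -
    have "(-1::int)^card S * (-1)^card T = (-1) ^ (2 * a + b + c)" unfolding cS cT power_add[symmetric] by (rule arg_cong[where f="\<lambda>k. (-1::int)^k"]) simp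
    also have "\<dots> = (-1) ^ (b + c)" by (simp add: power_add power_mult)
    also have "\<dots> = (-1) ^ (b + c + 2 * d)" by (simp add: power_add power_mult)
    finally show ?thesis .
  qed
  show ?thesis
    unfolding F_def[symmetric] P sgn VV_def a_def b_def c_def d_def X_def Y_def Z_def W_def by (simp add: mult_ac)
qed


theorem mainTheorem1:
  fixes n :: nat
  assumes "n > 0"
  shows "int (R3 n) =
    (\<Sum>(s00, s10, s01, s11) \<in> {(a, b, c, d). a + b + c + d = n}.
       (-1) ^ (s10 + s01 + 2 * s11)
       * int (fact n div (fact s00 * fact s10 * fact s01 * fact s11))
       * g (int s00 - 1) (int s10) (int s01) (int s11 + 1) ^ s00
       * g (int s00) (int s10 - 1) (int s01) (int s11 + 1) ^ s10
       * g (int s00) (int s10) (int s01 - 1) (int s11 + 1) ^ s01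
       * g (int s00) (int s10) (int s01) (int s11) ^ s11)"
proof -
  let ?N = "{..<n}"
  have fN: "finite ?N" by simp
  have cN: "card ?N = n" by simp
  have "int (R3 n) = int (card (PP n))" by (simp add: R3_card)
  also have "\<dots> = (\<Sum>S\<in>Pow ?N. \<Sum>T\<in>Pow ?N. (-1)^card S * (-1)^card T * (\<Prod>i\<in>?N. \<Sum>j\<in>S. \<Sum>k\<in>T. A0 i j k))"
    unfolding ryser[OF fN] sum_to_card ..
  also have "\<dots> = (\<Sum>S\<in>Pow ?N. \<Sum>T\<in>Pow ?N. VV (card (S \<inter> T)) (card (S - T)) (card (T - S)) (card (?N - (S \<union> T))))"
    by (intro sum.cong refl value_ST fN) auto
  also have "\<dots> = (\<Sum>s\<le>n. int (n choose s) * (\<Sum>a\<le>s. int (s choose a) *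
         (\<Sum>c\<le>n - s. int ((n - s) choose c) * VV a (s - a) c (n - s - c))))"
    unfolding group_ST[OF fN] cN ..
  also have "\<dots> = (\<Sum>(a, b, c, d)\<in>{(a, b, c, d). a + b + c + d = n}. int (fact n div (fact a * fact b * fact c * fact d)) * VV a b c d)"
    by (rule quad)
  also have "\<dots> = (\<Sum>(s00, s10, s01, s11) \<in> {(a, b, c, d). a + b + c + d = n}.
       (-1) ^ (s10 + s01 + 2 * s11)
       * int (fact n div (fact s00 * fact s10 * fact s01 * fact s11))
       * g (int s00 - 1) (int s10) (int s01) (int s11 + 1) ^ s00
       * g (int s00) (int s10 - 1) (int s01) (int s11 + 1) ^ s10
       * g (int s00) (int s10) (int s01 - 1) (int s11 + 1) ^ s01
       * g (int s00) (int s10) (int s01) (int s11) ^ s11)"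
    by (intro sum.cong refl) (clarsimp simp: VV_def mult_ac)
  finally show ?thesis .
qed

end
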